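(* Fix integers $k\ge 3$ and $r\ge 1$. For $n\ge 0$ let $c_n$ be the number of words on $[n]^r$ that avoid both $123$ and $1k(k-1)\cdots 2$. Then the sequence $(c_n)_{n\ge0}$ satisfies a linear recurrence with constant coefficients; equivalently, $\sum_{n\ge 0} c_n x^n$ is a rational function of $x$.
   Context: A word on $[n]^r$ is a word in which each letter $1,2,\dots,n$ appears exactly $r$ times and no other letter appears (for $r=1$ these are the permutations of $[n]$). A word $w_1\cdots w_m$ contains a pattern $p_1\cdots p_k$ if there are indices $i_1<\dots<i_k$ such that for all $r,s$: $w_{i_r}<w_{i_s}\iff p_r<p_s$ and $w_{i_r}>w_{i_s}\iff p_r>p_s$; otherwise it avoids it. The pattern $1k(k-1)\cdots 2$ is $1$ followed by $k,k-1,\dots,2$. *)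

theory Defs
  imports Complex_Main
begin

definition is_word_on :: "nat \<Rightarrow> nat \<Rightarrow> nat list \<Rightarrow> bool" where
  "is_word_on n r w \<longleftrightarrow> set w \<subseteq> {1..n} \<and> (\<forall>a\<in>{1..n}. count_list w a = r)"

definition contains_pattern :: "nat list \<Rightarrow> nat list \<Rightarrow> bool" where
  "contains_pattern w p \<longleftrightarrow>
     (\<exists>idx :: nat \<Rightarrow> nat.
        (\<forall>i j. i < j \<and> j < length p \<longrightarrow> idx i < idx j) \<and>
        (\<forall>i < length p. idx i < length w) \<and>
        (\<forall>i < length p. \<forall>j < length p.
            (w ! idx i < w ! idx j \<longleftrightarrow> p ! i < p ! j) \<and>
            (w ! idx i > w ! idx j \<longleftrightarrow> p ! i > p ! j)))"

definition avoids_pattern :: "nat list \<Rightarrow> nat list \<Rightarrow> bool" where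
  "avoids_pattern w p \<longleftrightarrow> \<not> contains_pattern w p"

definition pat_1_k_down :: "nat \<Rightarrow> nat list" where
  "pat_1_k_down k = 1 # rev [2..<k+1]"

definition count_avoiders :: "nat \<Rightarrow> nat \<Rightarrow> nat \<Rightarrow> nat" where
  "count_avoiders k r n = card {w. is_word_on n r w \<and> avoids_pattern w [1,2,3]
                                   \<and> avoids_pattern w (pat_1_k_down k)}"

end

theory Submission
  imports Defs "HOL-Library.Sublist" "Jordan_Normal_Form.Determinant"
begin


lemma subseq_idx1:
  "subseq v w \<Longrightarrow> (\<exists>idx. (\<forall>i j. i<j \<and> j<length v \<longrightarrow> idx i < idx j) \<and> (\<forall>i<length v. idx i < length w \<and> w ! idx i = v ! i))"
proof (induction rule: list_emb.induct)
  case (list_emb_Nil ys)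
  then show ?case by auto
next
  case (list_emb_Cons xs ys y)
  then obtain idx where "(\<forall>i j. i<j \<and> j<length xs \<longrightarrow> idx i < idx j)" "(\<forall>i<length xs. idx i < length ys \<and> ys ! idx i = xs ! i)" by blast
  then show ?case by (intro exI[of _ "\<lambda>i. Suc (idx i)"]) auto
next
  case (list_emb_Cons2 x y xs ys)
  then obtain idx where A: "(\<forall>i j. i<j \<and> j<length xs \<longrightarrow> idx i < idx j)" and B: "(\<forall>i<length xs. idx i < length ys \<and> ys ! idx i = xs ! i)" by blast
  show ?case
  proof (intro exI[of _ "\<lambda>i. case i of 0 \<Rightarrow> 0 | Suc i \<Rightarrow> Suc (idx i)"] conjI allI impI)
    fix i j assume "i < j \<and> j < length (x#xs)" then show "(case i of 0 \<Rightarrow> 0 | Suc i \<Rightarrow> Suc (idx i)) < (case j of 0 \<Rightarrow> 0 | Suc i \<Rightarrow> Suc (idx i))"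
      using A by (cases i; cases j) auto
  next
    fix i assume "i < length (x#xs)" then show "(case i of 0 \<Rightarrow> 0 | Suc i \<Rightarrow> Suc (idx i)) < length (y#ys)"
      using B by (cases i) auto
  next
    fix i assume "i < length (x#xs)" then show "(y#ys) ! (case i of 0 \<Rightarrow> 0 | Suc i \<Rightarrow> Suc (idx i)) = (x#xs) ! i"
      using B list_emb_Cons2 by (cases i) auto
  qed
qed

lemma subseq_idx2:
  "(\<forall>i j. i<j \<and> j<length v \<longrightarrow> idx i < idx j) \<Longrightarrow> (\<forall>i<length v. idx i < length w \<and> w ! idx i = v ! i) \<Longrightarrow> subseq v w"
proof (induction w arbitrary: v idx)
  case Nil
  then show ?case by (cases v) auto
next
  case (Cons y w)
  note A = Cons.prems(1) and B = Cons.prems(2)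
  show ?case
  proof (cases v)
    case Nil then show ?thesis by simp
  next
    case (Cons x xs)
    have pos: "idx (Suc i) > 0" if "i < length xs" for i
    proof -
      have "idx 0 < idx (Suc i)" using A that Cons by auto
      then show ?thesis by simp
    qed
    show ?thesis
    proof (cases "idx 0 = 0")
      case True
      have x: "x = y" using B Cons True by (metis length_Cons nth_Cons_0 zero_less_Suc)
      have "subseq xs w"
      proof (rule Cons.IH[of xs "\<lambda>i. idx (Suc i) - 1"]; intro allI impI)
        fix i j assume ij: "i < j \<and> j < length xs"
        have "idx (Suc i) < idx (Suc j)" using A Cons ij by auto
        moreover have "idx (Suc i) > 0" using pos ij by auto
        ultimately show "idx (Suc i) - 1 < idx (Suc j) - 1" by linarith
      next
        fix i assume i: "i < length xs"
        have p: "idx (Suc i) > 0" using pos i by auto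
        have b: "idx (Suc i) < length (y#w) \<and> (y#w) ! idx (Suc i) = v ! Suc i" using B Cons i by auto
        then have "idx (Suc i) - 1 < length w" using p by (cases "idx (Suc i)") auto
        moreover have "w ! (idx (Suc i) - 1) = xs ! i"
        proof -
          have "(y#w) ! idx (Suc i) = w ! (idx (Suc i) - 1)" using p by (simp add: nth_Cons')
          then show ?thesis using b Cons by simp
        qed
        ultimately show "idx (Suc i) - 1 < length w \<and> w ! (idx (Suc i) - 1) = xs ! i" by blast
      qed
      then show ?thesis using x Cons by simp
    next
      case False
      have pos2: "idx i > 0" if "i < length v" for i
      proof (cases i)
        case 0 then show ?thesis using False by simp
      next
        case (Suc i') then show ?thesis using pos that Cons by auto
      qed
      have "subseq v w"
      proof (rule Cons.IH[of v "\<lambda>i. idx i - 1"]; intro allI impI)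
        fix i j assume ij: "i < j \<and> j < length v"
        have "idx i < idx j" using A ij by auto
        moreover have "idx i > 0" using pos2 ij by auto
        ultimately show "idx i - 1 < idx j - 1" by linarith
      next
        fix i assume i: "i < length v"
        have p: "idx i > 0" using pos2 i by auto
        have b: "idx i < length (y#w) \<and> (y#w) ! idx i = v ! i" using B i by auto
        then have "idx i - 1 < length w" using p by (cases "idx i") auto
        moreover have "w ! (idx i - 1) = v ! i"
        proof -
          have "(y#w) ! idx i = w ! (idx i - 1)" using p by (simp add: nth_Cons')
          then show ?thesis using b by simp
        qed
        ultimately show "idx i - 1 < length w \<and> w ! (idx i - 1) = v ! i" by blast
      qed
      then show ?thesis by (rule list_emb_Cons)
    qed
  qed
qed

lemma contains_subseq:
  "contains_pattern w p \<longleftrightarrow> (\<exists>v. subseq v w \<and> length v = length p \<and>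
     (\<forall>i<length p. \<forall>j<length p. (v!i<v!j \<longleftrightarrow> p!i<p!j) \<and> (v!i>v!j \<longleftrightarrow> p!i>p!j)))"
proof
  assume "contains_pattern w p"
  then obtain idx where A: "(\<forall>i j. i < j \<and> j < length p \<longrightarrow> idx i < idx j)"
     "(\<forall>i < length p. idx i < length w)" and
     C: "(\<forall>i < length p. \<forall>j < length p.
            (w ! idx i < w ! idx j \<longleftrightarrow> p ! i < p ! j) \<and>
            (w ! idx i > w ! idx j \<longleftrightarrow> p ! i > p ! j))" unfolding contains_pattern_def by blast
  define v where "v = map (\<lambda>i. w ! idx i) [0..<length p]"
  have "subseq v w" by (rule subseq_idx2[of v idx]) (use A in \<open>auto simp: v_def\<close>)
  then show "\<exists>v. subseq v w \<and> length v = length p \<and>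
     (\<forall>i<length p. \<forall>j<length p. (v!i<v!j \<longleftrightarrow> p!i<p!j) \<and> (v!i>v!j \<longleftrightarrow> p!i>p!j))"
    using C by (intro exI[of _ v]) (auto simp: v_def)
next
  assume "\<exists>v. subseq v w \<and> length v = length p \<and>
     (\<forall>i<length p. \<forall>j<length p. (v!i<v!j \<longleftrightarrow> p!i<p!j) \<and> (v!i>v!j \<longleftrightarrow> p!i>p!j))"
  then obtain v where v: "subseq v w" "length v = length p" and
     C: "\<forall>i<length p. \<forall>j<length p. (v!i<v!j \<longleftrightarrow> p!i<p!j) \<and> (v!i>v!j \<longleftrightarrow> p!i>p!j)" by blast
  obtain idx where "(\<forall>i j. i<j \<and> j<length v \<longrightarrow> idx i < idx j)" "(\<forall>i<length v. idx i < length w \<and> w ! idx i = v ! i)"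
    using subseq_idx1[OF v(1)] by blast
  then show "contains_pattern w p" unfolding contains_pattern_def using v C
    by (intro exI[of _ idx]) auto
qed

definition has123 :: "nat list \<Rightarrow> bool" where
  "has123 w \<longleftrightarrow> (\<exists>a b c. subseq [a,b,c] w \<and> a < b \<and> b < c)"

definition hasP2 :: "nat \<Rightarrow> nat list \<Rightarrow> bool" where
  "hasP2 k w \<longleftrightarrow> (\<exists>a ds. subseq (a#ds) w \<and> length ds = k - 1 \<and> sorted_wrt (>) ds \<and> (\<forall>d\<in>set ds. a < d))"

lemma all3: "(\<forall>i<(3::nat). P i) \<longleftrightarrow> P 0 \<and> P 1 \<and> P 2"
proof -
  have "{..<(3::nat)} = {0,1,2}" by auto
  then show ?thesis by (metis insert_iff lessThan_iff singletonD)
qed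

lemma contains123: "contains_pattern w [1,2,3] \<longleftrightarrow> has123 w"
proof -
  have "(\<exists>v. subseq v w \<and> length v = 3 \<and>
     (\<forall>i<3. \<forall>j<3. (v!i<v!j \<longleftrightarrow> [1,2,3::nat]!i<[1,2,3::nat]!j) \<and> (v!i>v!j \<longleftrightarrow> [1,2,3::nat]!i>[1,2,3::nat]!j)))
    \<longleftrightarrow> has123 w"
  proof
    assume "\<exists>v. subseq v w \<and> length v = 3 \<and>
     (\<forall>i<3. \<forall>j<3. (v!i<v!j \<longleftrightarrow> [1,2,3::nat]!i<[1,2,3::nat]!j) \<and> (v!i>v!j \<longleftrightarrow> [1,2,3::nat]!i>[1,2,3::nat]!j))"
    then obtain v where v: "subseq v w" "length v = 3" and
      C: "\<forall>i<3. \<forall>j<3. (v!i<v!j \<longleftrightarrow> [1,2,3::nat]!i<[1,2,3::nat]!j) \<and> (v!i>v!j \<longleftrightarrow> [1,2,3::nat]!i>[1,2,3::nat]!j)" by blast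
    have "v = [v!0, v!1, v!2]" using v(2)
      by (cases v; cases "tl v"; cases "tl (tl v)") (auto simp: numeral_3_eq_3)
    moreover have "v!0 < v!1" "v!1 < v!2" using C by (auto simp: all3)
    ultimately show "has123 w" unfolding has123_def using v(1) by metis
  next
    assume "has123 w"
    then obtain a b c where "subseq [a,b,c] w" "a < b" "b < c" unfolding has123_def by blast
    then show "\<exists>v. subseq v w \<and> length v = 3 \<and>
     (\<forall>i<3. \<forall>j<3. (v!i<v!j \<longleftrightarrow> [1,2,3::nat]!i<[1,2,3::nat]!j) \<and> (v!i>v!j \<longleftrightarrow> [1,2,3::nat]!i>[1,2,3::nat]!j))"
      by (intro exI[of _ "[a,b,c]"]) (auto simp: all3)
  qed
  then show ?thesis unfolding contains_subseq by (simp add: numeral_3_eq_3)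
qed

lemma pat_len: assumes "k \<ge> 1" shows "length (pat_1_k_down k) = k"
proof -
  have "length [2..<k+1] = k - 1" by (cases k) auto
  then show ?thesis using assms unfolding pat_1_k_down_def by simp
qed

lemma pat_0: "pat_1_k_down k ! 0 = 1"
  by (simp add: pat_1_k_down_def)

lemma pat_Suc: assumes i: "i < k - 1" shows "pat_1_k_down k ! Suc i = k - i"
proof -
  have L: "length [2..<k+1] = k - 1" by (cases k) auto
  have "pat_1_k_down k ! Suc i = rev [2..<k+1] ! i" unfolding pat_1_k_down_def by (simp only: nth_Cons_Suc)
  also have "\<dots> = [2..<k+1] ! (length [2..<k+1] - Suc i)" by (rule rev_nth) (use i L in simp)
  also have "\<dots> = [2..<k+1] ! (k - 1 - Suc i)" using L by simp
  also have "\<dots> = 2 + (k - 1 - Suc i)" using i by (subst nth_upt) auto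
  also have "\<dots> = k - i" using i by simp
  finally show ?thesis .
qed

lemma containsP2: assumes "k \<ge> 1" shows "contains_pattern w (pat_1_k_down k) \<longleftrightarrow> hasP2 k w"
proof -
  let ?p = "pat_1_k_down k"
  have "(\<exists>v. subseq v w \<and> length v = k \<and>
     (\<forall>i<k. \<forall>j<k. (v!i<v!j \<longleftrightarrow> ?p!i<?p!j) \<and> (v!i>v!j \<longleftrightarrow> ?p!i>?p!j))) \<longleftrightarrow> hasP2 k w"
  proof
    assume "\<exists>v. subseq v w \<and> length v = k \<and>
     (\<forall>i<k. \<forall>j<k. (v!i<v!j \<longleftrightarrow> ?p!i<?p!j) \<and> (v!i>v!j \<longleftrightarrow> ?p!i>?p!j))"
    then obtain v where v: "subseq v w" "length v = k" and
      C: "\<forall>i<k. \<forall>j<k. (v!i<v!j \<longleftrightarrow> ?p!i<?p!j) \<and> (v!i>v!j \<longleftrightarrow> ?p!i>?p!j)" by blast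
    obtain a ds where v': "v = a # ds" using v(2) assms by (cases v) auto
    have lds: "length ds = k - 1" using v(2) v' by simp
    have "sorted_wrt (>) ds"
      unfolding sorted_wrt_iff_nth_less
    proof (intro allI impI)
      fix i j assume ij: "i < j" "j < length ds"
      have "v ! Suc i > v ! Suc j" using C[rule_format, of "Suc i" "Suc j"] ij lds v(2) pat_Suc[of i k] pat_Suc[of j k]
        by auto
      then show "ds ! i > ds ! j" using v' by simp
    qed
    moreover have "\<forall>d\<in>set ds. a < d"
    proof
      fix d assume "d \<in> set ds"
      then obtain i where i: "i < length ds" "ds ! i = d" by (auto simp: in_set_conv_nth)
      have "v ! 0 < v ! Suc i" using C[rule_format, of 0 "Suc i"] i lds v(2) pat_Suc[of i k] pat_0[of k]
        by auto
      then show "a < d" using v' i by simp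
    qed
    ultimately show "hasP2 k w" unfolding hasP2_def using v(1) v' lds by blast
  next
    assume "hasP2 k w"
    then obtain a ds where h: "subseq (a#ds) w" "length ds = k - 1" "sorted_wrt (>) ds" "\<forall>d\<in>set ds. a < d"
      unfolding hasP2_def by blast
    have C: "(\<forall>i<k. \<forall>j<k. ((a#ds)!i<(a#ds)!j \<longleftrightarrow> ?p!i<?p!j) \<and> ((a#ds)!i>(a#ds)!j \<longleftrightarrow> ?p!i>?p!j))"
    proof (intro allI impI)
      fix i j assume ij: "i < k" "j < k"
      show "((a#ds)!i<(a#ds)!j \<longleftrightarrow> ?p!i<?p!j) \<and> ((a#ds)!i>(a#ds)!j \<longleftrightarrow> ?p!i>?p!j)"
      proof (cases i)
        case 0
        then show ?thesis
        proof (cases j)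
          case 0 then show ?thesis using \<open>i = 0\<close> by simp
        next
          case (Suc j')
          have "a < ds ! j'" using h(4) h(2) ij Suc by auto
          then show ?thesis using \<open>i = 0\<close> Suc pat_0[of k] pat_Suc[of j' k] ij by auto
        qed
      next
        case (Suc i')
        then show ?thesis
        proof (cases j)
          case 0
          have "a < ds ! i'" using h(4) h(2) ij Suc by auto
          then show ?thesis using \<open>j = 0\<close> Suc pat_0[of k] pat_Suc[of i' k] ij by auto
        next
          case (Suc j')
          have "i' < j' \<Longrightarrow> ds ! i' > ds ! j'" using h(3) h(2) ij Suc \<open>i = Suc i'\<close>
            by (auto simp: sorted_wrt_iff_nth_less)
          moreover have "j' < i' \<Longrightarrow> ds ! j' > ds ! i'" using h(3) h(2) ij Suc \<open>i = Suc i'\<close>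
            by (auto simp: sorted_wrt_iff_nth_less)
          ultimately show ?thesis using \<open>i = Suc i'\<close> Suc pat_Suc[of i' k] pat_Suc[of j' k] ij
            by (cases "i' < j'"; cases "j' < i'") auto
        qed
      qed
    qed
    show "\<exists>v. subseq v w \<and> length v = k \<and>
     (\<forall>i<k. \<forall>j<k. (v!i<v!j \<longleftrightarrow> ?p!i<?p!j) \<and> (v!i>v!j \<longleftrightarrow> ?p!i>?p!j))"
      using h(1,2) C assms by (intro exI[of _ "a#ds"]) auto
  qed
  then show ?thesis unfolding contains_subseq pat_len[OF assms] by simp
qed



definition inc2 :: "nat list \<Rightarrow> bool" where
  "inc2 ys \<longleftrightarrow> (\<exists>a b. subseq [a,b] ys \<and> a < b)"
definition dch :: "nat \<Rightarrow> nat list \<Rightarrow> bool" where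
  "dch m ys \<longleftrightarrow> (\<exists>ds. subseq ds ys \<and> length ds = m \<and> sorted_wrt (>) ds)"
definition good :: "nat \<Rightarrow> nat list \<Rightarrow> bool" where
  "good k ys \<longleftrightarrow> \<not> inc2 ys \<and> \<not> dch (k - 1) ys"
definition bad :: "nat \<Rightarrow> nat list \<Rightarrow> bool" where
  "bad k w \<longleftrightarrow> has123 w \<or> hasP2 k w"

lemma subseq_set: "subseq xs ys \<Longrightarrow> set xs \<subseteq> set ys"
  by (induction rule: list_emb.induct) auto

lemma subseq_trans: "subseq xs ys \<Longrightarrow> subseq ys zs \<Longrightarrow> subseq xs zs"
  by (rule subseq_order.order_trans)

lemma subseq_first: "x \<notin> set u \<Longrightarrow> subseq (x#xs) (u @ x # v) \<Longrightarrow> subseq xs v"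
proof (induction u)
  case Nil then show ?case by simp
next
  case (Cons y u)
  then have "y \<noteq> x" by auto
  then have "subseq (x#xs) (u @ x # v)" using Cons.prems(2) by simp
  then show ?case using Cons by simp
qed

lemma has123_mono: "subseq w1 w2 \<Longrightarrow> has123 w1 \<Longrightarrow> has123 w2"
  unfolding has123_def by (meson subseq_trans)
lemma hasP2_mono: "subseq w1 w2 \<Longrightarrow> hasP2 k w1 \<Longrightarrow> hasP2 k w2"
  unfolding hasP2_def by (meson subseq_trans)
lemma bad_mono: "subseq w1 w2 \<Longrightarrow> bad k w1 \<Longrightarrow> bad k w2"
  unfolding bad_def using has123_mono hasP2_mono by blast
lemma good_mono: "subseq xs ys \<Longrightarrow> good k ys \<Longrightarrow> good k xs"
  unfolding good_def inc2_def dch_def by (meson subseq_trans)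

lemma decomp:
  fixes u v :: "nat list"
  assumes u1: "1 \<notin> set u" and pos: "\<forall>x\<in>set (u @ 1 # v). 1 \<le> x"
  shows "bad k (u @ 1 # v) \<longleftrightarrow> bad k (filter (\<lambda>x. x \<noteq> 1) (u @ v)) \<or> \<not> good k (filter (\<lambda>x. x \<noteq> 1) v)"
proof
  let ?f = "filter (\<lambda>x::nat. x \<noteq> 1)"
  let ?w = "u @ 1 # v"
  have fw: "?f ?w = ?f (u @ v)" by simp
  assume "bad k ?w"
  then have "has123 ?w \<or> hasP2 k ?w" unfolding bad_def .
  then show "bad k (?f (u @ v)) \<or> \<not> good k (?f v)"
  proof
    assume "has123 ?w"
    then obtain a b c where abc: "subseq [a,b,c] ?w" "a < b" "b < c" unfolding has123_def by blast
    have "a \<in> set ?w" using subseq_set[OF abc(1)] by auto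
    then have a1: "a \<ge> 1" using pos by auto
    show ?thesis
    proof (cases "a = 1")
      case True
      then have "subseq [b,c] v" using subseq_first[OF u1] abc(1) by simp
      then have "subseq (?f [b,c]) (?f v)" by (rule subseq_filter)
      moreover have "?f [b,c] = [b,c]" using abc True by auto
      ultimately have "subseq [b,c] (?f v)" by simp
      then have "inc2 (?f v)" unfolding inc2_def using abc(3) by blast
      then show ?thesis unfolding good_def by blast
    next
      case False
      have "subseq (?f [a,b,c]) (?f ?w)" using abc(1) by (rule subseq_filter)
      moreover have "?f [a,b,c] = [a,b,c]" using abc False a1 by auto
      ultimately have "subseq [a,b,c] (?f (u @ v))" using fw by simp
      then have "has123 (?f (u @ v))" unfolding has123_def using abc(2,3) by blast
      then show ?thesis unfolding bad_def by blast
    qed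
  next
    assume "hasP2 k ?w"
    then obtain a ds where h: "subseq (a#ds) ?w" "length ds = k - 1" "sorted_wrt (>) ds" "\<forall>d\<in>set ds. a < d"
      unfolding hasP2_def by blast
    have "a \<in> set ?w" using subseq_set[OF h(1)] by auto
    then have a1: "a \<ge> 1" using pos by auto
    show ?thesis
    proof (cases "a = 1")
      case True
      then have "subseq ds v" using subseq_first[OF u1] h(1) by simp
      then have "subseq (?f ds) (?f v)" by (rule subseq_filter)
      moreover have "?f ds = ds" using h(4) True by (auto intro: filter_True)
      ultimately have "subseq ds (?f v)" by simp
      then have "dch (k - 1) (?f v)" unfolding dch_def using h(2,3) by blast
      then show ?thesis unfolding good_def by blast
    next
      case False
      have "subseq (?f (a#ds)) (?f ?w)" using h(1) by (rule subseq_filter)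
      moreover have "?f (a#ds) = a#ds" using h(4) False a1 by (auto intro: filter_True)
      ultimately have "subseq (a#ds) (?f (u @ v))" using fw by simp
      then have "hasP2 k (?f (u @ v))" unfolding hasP2_def using h(2,3,4) by blast
      then show ?thesis unfolding bad_def by blast
    qed
  qed
next
  let ?f = "filter (\<lambda>x::nat. x \<noteq> 1)"
  let ?w = "u @ 1 # v"
  assume "bad k (?f (u @ v)) \<or> \<not> good k (?f v)"
  then show "bad k ?w"
  proof
    assume "bad k (?f (u @ v))"
    moreover have "subseq (?f (u @ v)) ?w"
    proof -
      have "subseq (?f ?w) ?w" by (rule subseq_filter_left)
      moreover have "?f ?w = ?f (u @ v)" by simp
      ultimately show ?thesis by simp
    qed
    ultimately show ?thesis using bad_mono by blast
  next
    have fv: "subseq (?f v) v" by simp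
    have sw: "subseq (1 # v) ?w" by (rule list_emb_append2) simp
    assume "\<not> good k (?f v)"
    then have "inc2 (?f v) \<or> dch (k - 1) (?f v)" unfolding good_def by blast
    then show ?thesis
    proof
      assume "inc2 (?f v)"
      then obtain a b where ab: "subseq [a,b] (?f v)" "a < b" unfolding inc2_def by blast
      have "a \<in> set (?f v)" using subseq_set[OF ab(1)] by auto
      then have a1: "a \<in> set v" "a \<noteq> 1" by auto
      then have "1 \<le> a" using pos by auto
      then have "a > 1" using a1 by linarith
      have "subseq [a,b] v" by (rule subseq_trans[OF ab(1) fv])
      then have "subseq [1,a,b] (1 # v)" by simp
      then have "subseq [1,a,b] ?w" using sw by (rule subseq_trans)
      then have "has123 ?w" unfolding has123_def using \<open>a > 1\<close> ab(2) by blast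
      then show ?thesis unfolding bad_def by blast
    next
      assume "dch (k - 1) (?f v)"
      then obtain ds where ds: "subseq ds (?f v)" "length ds = k - 1" "sorted_wrt (>) ds" unfolding dch_def by blast
      have "\<forall>d\<in>set ds. 1 < d"
      proof
        fix d assume "d \<in> set ds"
        then have "d \<in> set (?f v)" using subseq_set[OF ds(1)] by auto
        then have d1: "d \<in> set v" "d \<noteq> 1" by auto
        then have "1 \<le> d" using pos by auto
        then show "1 < d" using d1 by linarith
      qed
      have "subseq ds v" by (rule subseq_trans[OF ds(1) fv])
      then have "subseq (1#ds) (1 # v)" by simp
      then have "subseq (1#ds) ?w" using sw by (rule subseq_trans)
      then have "hasP2 k ?w" unfolding hasP2_def using ds \<open>\<forall>d\<in>set ds. 1 < d\<close> by blast
      then show ?thesis unfolding bad_def by blast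
    qed
  qed
qed

lemma good_Nil: "k \<ge> 2 \<Longrightarrow> good k []"
  unfolding good_def inc2_def dch_def by auto

definition gsi :: "nat \<Rightarrow> nat list \<Rightarrow> nat" where
  "gsi k ys = (LEAST i. good k (drop i ys))"
definition gs :: "nat \<Rightarrow> nat list \<Rightarrow> nat list" where
  "gs k ys = drop (gsi k ys) ys"

lemma gsi_good: "k \<ge> 2 \<Longrightarrow> good k (drop (gsi k ys) ys)"
  unfolding gsi_def by (rule LeastI[of _ "length ys"]) (simp add: good_Nil)

lemma gsi_le: "k \<ge> 2 \<Longrightarrow> gsi k ys \<le> length ys"
  unfolding gsi_def by (rule Least_le) (simp add: good_Nil)

lemma good_drop_iff: assumes "k \<ge> 2" shows "good k (drop i ys) \<longleftrightarrow> gsi k ys \<le> i"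
proof
  assume "good k (drop i ys)" then show "gsi k ys \<le> i" unfolding gsi_def by (rule Least_le)
next
  assume "gsi k ys \<le> i"
  then have "drop i ys = drop (i - gsi k ys) (drop (gsi k ys) ys)" by simp
  then have "subseq (drop i ys) (drop (gsi k ys) ys)" by (metis suffix_drop suffix_imp_subseq)
  then show "good k (drop i ys)" using gsi_good[OF assms] good_mono by blast
qed

lemma good_gs: "k \<ge> 2 \<Longrightarrow> good k (gs k ys)"
  unfolding gs_def by (rule gsi_good)

lemma length_gs: "length (gs k ys) = length ys - gsi k ys"
  unfolding gs_def by simp

lemma set_gs: "set (gs k ys) \<subseteq> set ys"
  unfolding gs_def by (rule set_drop_subset)

lemma subseq_map_inv: "subseq zs (map h ys) \<Longrightarrow> \<exists>xs. subseq xs ys \<and> zs = map h xs"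
proof (induction ys arbitrary: zs)
  case Nil then show ?case by auto
next
  case (Cons y ys)
  show ?case
  proof (cases zs)
    case Nil then show ?thesis by (intro exI[of _ "[]"]) auto
  next
    case (Cons z zs')
    show ?thesis
    proof (cases "z = h y")
      case True
      then have "subseq zs' (map h ys)" using Cons.prems Cons by simp
      then obtain xs where "subseq xs ys" "zs' = map h xs" using Cons.IH by blast
      then show ?thesis using True Cons by (intro exI[of _ "y#xs"]) auto
    next
      case False
      then have "subseq zs (map h ys)" using Cons.prems Cons by simp
      then obtain xs where "subseq xs ys" "zs = map h xs" using Cons.IH by blast
      then show ?thesis by (intro exI[of _ xs]) auto
    qed
  qed
qed

lemma smo_less: "strict_mono_on A (h::nat\<Rightarrow>nat) \<Longrightarrow> x \<in> A \<Longrightarrow> y \<in> A \<Longrightarrow> (h x < (h y :: nat)) \<longleftrightarrow> x < (y::nat)"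
  by (rule strict_mono_on_less)

lemma sorted_gt_map: "set ds \<subseteq> A \<Longrightarrow> strict_mono_on A (h::nat\<Rightarrow>nat) \<Longrightarrow> sorted_wrt (>) (map h ds) \<longleftrightarrow> sorted_wrt (>) (ds :: nat list)"
proof (induction ds)
  case Nil then show ?case by simp
next
  case (Cons d ds)
  have "(\<forall>y\<in>set ds. h y < h d) \<longleftrightarrow> (\<forall>y\<in>set ds. y < d)"
    using Cons.prems smo_less[of A h] by auto
  then show ?case using Cons by (auto simp: sorted_wrt_map)
qed

lemma smo_sub: "strict_mono_on A h \<Longrightarrow> B \<subseteq> A \<Longrightarrow> strict_mono_on B h"
  by (rule monotone_on_subset)

lemma inc2_map: assumes "strict_mono_on (set ys) h" shows "inc2 (map h ys) \<longleftrightarrow> inc2 ys"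
proof
  assume "inc2 (map h ys)"
  then obtain a b where ab: "subseq [a,b] (map h ys)" "a < b" unfolding inc2_def by blast
  obtain xs where xs0: "subseq xs ys \<and> [a,b] = map h xs" using subseq_map_inv[OF ab(1)] ..
  then have xs: "subseq xs ys" "[a,b] = map h xs" by simp_all
  obtain a' b' where xs': "xs = [a',b']" using xs(2) by (cases xs; cases "tl xs") auto
  have hab: "a = h a'" "b = h b'" using xs(2) xs' by auto
  have "set xs \<subseteq> set ys" using subseq_set[OF xs(1)] .
  then have "a' \<in> set ys" "b' \<in> set ys" using xs' by auto
  then have "a' < b'" using smo_less[OF assms] ab(2) hab by blast
  moreover have "subseq [a',b'] ys" using xs xs' by simp
  ultimately show "inc2 ys" unfolding inc2_def by blast
next
  assume "inc2 ys"
  then obtain a b where ab: "subseq [a,b] ys" "a < b" unfolding inc2_def by blast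
  have "set [a,b] \<subseteq> set ys" using subseq_set[OF ab(1)] .
  then have "h a < h b" using smo_less[OF assms, of a b] ab(2) by simp
  moreover have "subseq [h a, h b] (map h ys)" using subseq_map[OF ab(1), of h] by simp
  ultimately show "inc2 (map h ys)" unfolding inc2_def by blast
qed

lemma dch_map: assumes "strict_mono_on (set ys) h" shows "dch m (map h ys) \<longleftrightarrow> dch m ys"
proof
  assume "dch m (map h ys)"
  then obtain ds where ds: "subseq ds (map h ys)" "length ds = m" "sorted_wrt (>) ds" unfolding dch_def by blast
  obtain xs where xs0: "subseq xs ys \<and> ds = map h xs" using subseq_map_inv[OF ds(1)] ..
  then have xs: "subseq xs ys" "ds = map h xs" by simp_all
  have "set xs \<subseteq> set ys" using subseq_set[OF xs(1)] .
  then have "sorted_wrt (>) xs" using sorted_gt_map[OF _ assms] ds xs by blast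
  then show "dch m ys" unfolding dch_def using xs ds by auto
next
  assume "dch m ys"
  then obtain ds where ds: "subseq ds ys" "length ds = m" "sorted_wrt (>) ds" unfolding dch_def by blast
  have "set ds \<subseteq> set ys" using subseq_set[OF ds(1)] .
  then have "sorted_wrt (>) (map h ds)" using sorted_gt_map[OF _ assms] ds by blast
  moreover have "subseq (map h ds) (map h ys)" using ds(1) by (rule subseq_map)
  ultimately show "dch m (map h ys)" unfolding dch_def using ds by auto
qed

lemma good_map: "strict_mono_on (set ys) h \<Longrightarrow> good k (map h ys) \<longleftrightarrow> good k ys"
  unfolding good_def using inc2_map dch_map by blast

lemma has123_map: assumes "strict_mono_on (set ys) h" shows "has123 (map h ys) \<longleftrightarrow> has123 ys"
proof
  assume "has123 (map h ys)"
  then obtain a b c where ab: "subseq [a,b,c] (map h ys)" "a < b" "b < c" unfolding has123_def by blast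
  obtain xs where xs0: "subseq xs ys \<and> [a,b,c] = map h xs" using subseq_map_inv[OF ab(1)] ..
  then have xs: "subseq xs ys" "[a,b,c] = map h xs" by simp_all
  obtain a' b' c' where xs': "xs = [a',b',c']" using xs(2) by (cases xs; cases "tl xs"; cases "tl (tl xs)") auto
  have hab: "a = h a'" "b = h b'" "c = h c'" using xs(2) xs' by auto
  have "set xs \<subseteq> set ys" using subseq_set[OF xs(1)] .
  then have "a' \<in> set ys" "b' \<in> set ys" "c' \<in> set ys" using xs' by auto
  then have "a' < b'" "b' < c'" using smo_less[OF assms] ab(2,3) hab by blast+
  moreover have "subseq [a',b',c'] ys" using xs xs' by simp
  ultimately show "has123 ys" unfolding has123_def by blast
next
  assume "has123 ys"
  then obtain a b c where ab: "subseq [a,b,c] ys" "a < b" "b < c" unfolding has123_def by blast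
  have "set [a,b,c] \<subseteq> set ys" using subseq_set[OF ab(1)] .
  then have "h a < h b" "h b < h c" using smo_less[OF assms, of a b] smo_less[OF assms, of b c] ab(2,3) by simp_all
  moreover have "subseq [h a, h b, h c] (map h ys)" using subseq_map[OF ab(1), of h] by simp
  ultimately show "has123 (map h ys)" unfolding has123_def by blast
qed

lemma hasP2_map: assumes "strict_mono_on (set ys) h" shows "hasP2 k (map h ys) \<longleftrightarrow> hasP2 k ys"
proof
  assume "hasP2 k (map h ys)"
  then obtain a ds where h: "subseq (a#ds) (map h ys)" "length ds = k - 1" "sorted_wrt (>) ds" "\<forall>d\<in>set ds. a < d"
    unfolding hasP2_def by blast
  obtain xs where xs0: "subseq xs ys \<and> a#ds = map h xs" using subseq_map_inv[OF h(1)] ..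
  then have xs: "subseq xs ys" "a#ds = map h xs" by simp_all
  obtain a' ds' where xs': "xs = a'#ds'" using xs(2) by (cases xs) auto
  have sub: "set xs \<subseteq> set ys" using subseq_set[OF xs(1)] .
  have "sorted_wrt (>) ds'" using sorted_gt_map[OF _ assms, of ds'] sub xs xs' h(3) by auto
  moreover have "\<forall>d\<in>set ds'. a' < d" using h(4) xs xs' sub smo_less[OF assms] by auto
  ultimately show "hasP2 k ys" unfolding hasP2_def using xs xs' h(2) by auto
next
  assume "hasP2 k ys"
  then obtain a ds where h: "subseq (a#ds) ys" "length ds = k - 1" "sorted_wrt (>) ds" "\<forall>d\<in>set ds. a < d"
    unfolding hasP2_def by blast
  have sub: "set (a#ds) \<subseteq> set ys" using subseq_set[OF h(1)] .
  have "subseq (map h (a#ds)) (map h ys)" using h(1) by (rule subseq_map)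
  moreover have "sorted_wrt (>) (map h ds)" using sorted_gt_map[OF _ assms, of ds] sub h(3) by auto
  moreover have "\<forall>d\<in>set (map h ds). h a < d" using h(4) sub smo_less[OF assms] by auto
  moreover have "length (map h ds) = k - 1" using h(2) by simp
  ultimately show "hasP2 k (map h ys)" unfolding hasP2_def by (metis list.simps(9))
qed

lemma bad_map: "strict_mono_on (set ys) h \<Longrightarrow> bad k (map h ys) \<longleftrightarrow> bad k ys"
  unfolding bad_def using has123_map hasP2_map by blast

lemma gsi_map: assumes "k \<ge> 2" "strict_mono_on (set ys) h" shows "gsi k (map h ys) = gsi k ys"
proof -
  have "good k (drop i (map h ys)) \<longleftrightarrow> good k (drop i ys)" for i
  proof -
    have "strict_mono_on (set (drop i ys)) h" using assms(2) set_drop_subset by (rule smo_sub)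
    then show ?thesis by (simp add: drop_map good_map)
  qed
  then show ?thesis unfolding gsi_def by simp
qed

lemma gs_map: "k \<ge> 2 \<Longrightarrow> strict_mono_on (set ys) h \<Longrightarrow> gs k (map h ys) = map h (gs k ys)"
  unfolding gs_def by (simp add: gsi_map drop_map)



definition rank :: "nat list \<Rightarrow> nat \<Rightarrow> nat" where
  "rank xs x = card {y \<in> set xs. y \<le> x}"
definition std :: "nat list \<Rightarrow> nat list" where
  "std xs = map (rank xs) xs"

lemma length_std[simp]: "length (std xs) = length xs"
  by (simp add: std_def)

lemma std_map: assumes h: "strict_mono_on (set zs) h" shows "std (map h zs) = std zs"
proof -
  have "rank (map h zs) (h x) = rank zs x" if x: "x \<in> set zs" for x
  proof -
    have "{y \<in> set (map h zs). y \<le> h x} = h ` {y \<in> set zs. y \<le> x}"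
      using strict_mono_on_less_eq[OF h _ x] by auto
    moreover have "inj_on h {y \<in> set zs. y \<le> x}"
      using strict_mono_on_imp_inj_on[OF h] by (rule inj_on_subset) auto
    ultimately show ?thesis unfolding rank_def by (simp add: card_image)
  qed
  then show ?thesis unfolding std_def by simp
qed

lemma rank_smo: "strict_mono_on (set xs) (rank xs)"
proof (rule strict_mono_onI)
  fix x y assume xy: "x \<in> set xs" "y \<in> set xs" "x < y"
  have "{z \<in> set xs. z \<le> x} \<subseteq> {z \<in> set xs. z \<le> y}" using xy by auto
  moreover have "y \<in> {z \<in> set xs. z \<le> y}" "y \<notin> {z \<in> set xs. z \<le> x}" using xy by auto
  ultimately have "{z \<in> set xs. z \<le> x} \<subset> {z \<in> set xs. z \<le> y}" by blast
  then show "rank xs x < rank xs y" unfolding rank_def using psubset_card_mono[of "{z \<in> set xs. z \<le> y}"] by simp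
qed

lemma rank_bounds: "x \<in> set xs \<Longrightarrow> 1 \<le> rank xs x \<and> rank xs x \<le> card (set xs)"
proof -
  assume x: "x \<in> set xs"
  have "{z \<in> set xs. z \<le> x} \<noteq> {}" using x by auto
  then have "1 \<le> rank xs x" unfolding rank_def by (simp add: Suc_leI card_gt_0_iff)
  moreover have "rank xs x \<le> card (set xs)" unfolding rank_def by (rule card_mono) auto
  ultimately show ?thesis by simp
qed

lemma set_std: "set (std xs) \<subseteq> {1..card (set xs)}"
  unfolding std_def using rank_bounds by auto

lemma std_inv: "\<exists>g. strict_mono_on (set (std xs)) g \<and> xs = map g (std xs) \<and> (\<forall>y\<in>set (std xs). g y \<in> set xs)"
proof -
  let ?R = "rank xs"
  define g where "g = inv_into (set xs) ?R"
  have inj: "inj_on ?R (set xs)" by (rule strict_mono_on_imp_inj_on[OF rank_smo])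
  have gR: "g (?R x) = x" if "x \<in> set xs" for x unfolding g_def using inv_into_f_f[OF inj that] .
  have "strict_mono_on (set (std xs)) g"
  proof (rule strict_mono_onI)
    fix a b assume ab: "a \<in> set (std xs)" "b \<in> set (std xs)" "a < b"
    then obtain x y where xy: "x \<in> set xs" "y \<in> set xs" "a = ?R x" "b = ?R y" unfolding std_def by auto
    have "x < y" using ab(3) xy strict_mono_on_less[OF rank_smo[of xs], of x y] by auto
    then show "g a < g b" using xy gR by simp
  qed
  moreover have "xs = map g (std xs)" unfolding std_def using gR by (simp add: map_idI)
  moreover have "\<forall>y\<in>set (std xs). g y \<in> set xs" unfolding std_def using gR by auto
  ultimately show ?thesis by blast
qed

fun mg :: "bool list \<Rightarrow> nat list \<Rightarrow> nat list" where
  "mg [] ys = []"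
| "mg (True # bs) ys = 1 # mg bs ys"
| "mg (False # bs) [] = mg bs []"
| "mg (False # bs) (y # ys) = y # mg bs ys"

lemma mg_rep: "p \<le> length ys \<Longrightarrow> mg (replicate p False @ b) ys = take p ys @ mg b (drop p ys)"
proof (induction p arbitrary: ys)
  case 0 then show ?case by simp
next
  case (Suc p)
  then obtain y ys' where "ys = y # ys'" by (cases ys) auto
  then show ?case using Suc by simp
qed

lemma mg_filter: "1 \<notin> set ys \<Longrightarrow> count_list b False = length ys \<Longrightarrow> filter (\<lambda>x. x \<noteq> 1) (mg b ys) = ys"
proof (induction b arbitrary: ys)
  case Nil then show ?case by simp
next
  case (Cons c b)
  show ?case
  proof (cases c)
    case True then show ?thesis using Cons by simp
  next
    case False
    then obtain y ys' where "ys = y # ys'" using Cons.prems by (cases ys) auto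
    then show ?thesis using Cons False by simp
  qed
qed

lemma mg_mask: "1 \<notin> set ys \<Longrightarrow> count_list b False = length ys \<Longrightarrow> map (\<lambda>x. x = 1) (mg b ys) = b"
proof (induction b arbitrary: ys)
  case Nil then show ?case by simp
next
  case (Cons c b)
  show ?case
  proof (cases c)
    case True then show ?thesis using Cons by simp
  next
    case False
    then obtain y ys' where "ys = y # ys'" using Cons.prems by (cases ys) auto
    then show ?thesis using Cons False by auto
  qed
qed

lemma mg_recon: "mg (map (\<lambda>x. x = 1) w) (filter (\<lambda>x. x \<noteq> 1) w) = w"
  by (induction w) auto

lemma mg_count: "count_list b False = length ys \<Longrightarrow>
   count_list (mg b ys) x = (if x = 1 then count_list b True else 0) + count_list ys x"
proof (induction b arbitrary: ys)
  case Nil then show ?case by simp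
next
  case (Cons c b)
  show ?case
  proof (cases c)
    case True then show ?thesis using Cons by simp
  next
    case False
    then obtain y ys' where "ys = y # ys'" using Cons.prems by (cases ys) auto
    then show ?thesis using Cons False by auto
  qed
qed

lemma mg_set: "set (mg b ys) \<subseteq> insert 1 (set ys)"
  by (induction b ys rule: mg.induct) auto

lemma mg_relabel: "h 1 = 1 \<Longrightarrow> (\<forall>y\<in>set s. h (Suc y) = Suc (g y)) \<Longrightarrow>
   mg b (map Suc (map g s)) = map h (mg b (map Suc s))"
proof (induction b arbitrary: s)
  case Nil then show ?case by simp
next
  case (Cons c b)
  show ?case
  proof (cases c)
    case True then show ?thesis using Cons by simp
  next
    case False
    show ?thesis
    proof (cases s)
      case Nil then show ?thesis using Cons.IH[of "[]"] Cons.prems False by simp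
    next
      case (Cons y s')
      then show ?thesis using Cons.IH[of s'] Cons.prems False by simp
    qed
  qed
qed

lemma length_bool: "length (b::bool list) = count_list b True + count_list b False"
  by (induction b) auto

lemma subseq_pair: "i < j \<Longrightarrow> j < length xs \<Longrightarrow> subseq [xs!i, xs!j] xs"
  by (rule subseq_idx2[of _ "\<lambda>t. if t = 0 then i else j"]) (auto simp: less_Suc_eq)

lemma not_inc2_sorted: "\<not> inc2 xs \<Longrightarrow> sorted_wrt (\<ge>) xs"
  unfolding sorted_wrt_iff_nth_less
proof (intro allI impI)
  fix i j assume "\<not> inc2 xs" "i < j" "j < length xs"
  then show "xs ! i \<ge> xs ! j" using subseq_pair[of i j xs] unfolding inc2_def
    by (meson not_le)
qed

lemma sorted_desc_subseq:
  fixes xs ys :: "nat list"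
  assumes "set xs \<subseteq> set ys" "sorted_wrt (>) xs" "sorted_wrt (\<ge>) ys"
  shows "subseq xs ys"
  using assms
proof (induction xs arbitrary: ys)
  case Nil then show ?case by auto
next
  case (Cons x xs)
  then have "x \<in> set ys" by auto
  then obtain us vs where ys: "ys = us @ [x] @ vs"
    by (metis append.left_neutral append_eq_Cons_conv split_list)
  have "set xs \<subseteq> set vs"
  proof
    fix z assume z: "z \<in> set xs"
    then have zx: "z < x" using Cons.prems(2) by auto
    have "z \<in> set ys" using z Cons.prems(1) by auto
    moreover have "z \<notin> set us"
    proof
      assume "z \<in> set us"
      then have "z \<ge> x" using Cons.prems(3) ys by (auto simp: sorted_wrt_append)
      then show False using zx by simp
    qed
    moreover have "z \<noteq> x" using zx by simp
    ultimately show "z \<in> set vs" using ys by auto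
  qed
  moreover have "sorted_wrt (\<ge>) vs" using Cons.prems(3) ys by (simp add: sorted_wrt_append)
  ultimately have "subseq xs vs" using Cons by auto
  then show ?case using ys by auto
qed

lemma good_card: assumes "good k xs" "k \<ge> 2" shows "card (set xs) \<le> k - 2"
proof (rule ccontr)
  assume c: "\<not> card (set xs) \<le> k - 2"
  define L where "L = rev (sorted_list_of_set (set xs))"
  have sL: "sorted_wrt (>) L" unfolding L_def by (simp add: sorted_wrt_rev strict_sorted_list_of_set)
  have setL: "set L = set xs" unfolding L_def by simp
  have lenL: "length L = card (set xs)" unfolding L_def by simp
  have "sorted_wrt (\<ge>) xs" using assms(1) not_inc2_sorted unfolding good_def by blast
  then have "subseq L xs" using sorted_desc_subseq[of L xs] sL setL by simp
  moreover have "subseq (take (k - 1) L) L" by (rule prefix_imp_subseq) (rule take_is_prefix)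
  ultimately have "subseq (take (k - 1) L) xs" using subseq_trans by blast
  moreover have "length (take (k - 1) L) = k - 1" using lenL c by simp
  moreover have "sorted_wrt (>) (take (k - 1) L)" using sL by (rule sorted_wrt_take)
  ultimately have "dch (k - 1) xs" unfolding dch_def by blast
  then show False using assms(1) unfolding good_def by blast
qed



lemma count_rep[simp]: "count_list (replicate n x) y = (if x = y then n else 0)"
  by (induction n) auto

lemma count_filter: "count_list (filter P xs) x = (if P x then count_list xs x else 0)"
  by (induction xs) auto

lemma count_mask_True: "count_list (map (\<lambda>x. x = (1::nat)) w) True = count_list w 1"
  by (induction w) auto

lemma count_mask_False: "count_list (map (\<lambda>x. x = (1::nat)) w) False = length (filter (\<lambda>x. x \<noteq> 1) w)"
  by (induction w) auto

lemma gs_append: assumes k: "k \<ge> 2" and nb: "\<forall>i < length P. \<not> good k (drop i (P @ X))"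
  shows "gs k (P @ X) = gs k X"
proof -
  have iff: "gsi k (P @ X) \<le> i \<longleftrightarrow> length P + gsi k X \<le> i" for i
  proof (cases "i < length P")
    case True
    then show ?thesis using nb good_drop_iff[OF k, of i "P @ X"] by auto
  next
    case False
    then have "drop i (P @ X) = drop (i - length P) X" by simp
    then have "good k (drop i (P @ X)) \<longleftrightarrow> gsi k X \<le> i - length P"
      using good_drop_iff[OF k] by metis
    then show ?thesis using good_drop_iff[OF k, of i "P @ X"] False by auto
  qed
  have "gsi k (P @ X) = length P + gsi k X"
    using iff[of "gsi k (P @ X)"] iff[of "length P + gsi k X"] by simp
  then show ?thesis unfolding gs_def by simp
qed

lemma map_Suc_pred: "\<forall>x\<in>set xs. 2 \<le> x \<Longrightarrow> map Suc (map (\<lambda>x. x - 1) xs) = (xs::nat list)"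
  by (induction xs) auto

locale AV =
  fixes k r :: nat
  assumes k3: "k \<ge> 3" and r1: "r \<ge> 1"
begin

lemma k2: "k \<ge> 2" using k3 by simp

definition Av :: "nat \<Rightarrow> nat list set" where
  "Av n = {w. is_word_on n r w \<and> \<not> bad k w}"

lemma Av_eq: "Av n = {w. is_word_on n r w \<and> avoids_pattern w [1,2,3] \<and> avoids_pattern w (pat_1_k_down k)}"
proof -
  have "k \<ge> 1" using k3 by simp
  then show ?thesis unfolding Av_def avoids_pattern_def bad_def contains123 containsP2[OF \<open>k \<ge> 1\<close>] by auto
qed

definition st :: "nat list \<Rightarrow> nat list" where "st w = std (gs k w)"

definition Bset :: "nat \<Rightarrow> bool list set" where
  "Bset g = {b. b \<noteq> [] \<and> hd b \<and> count_list b True = r \<and> count_list b False \<le> g}"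

definition Phi :: "nat list \<Rightarrow> bool list \<Rightarrow> nat list" where
  "Phi w b = mg (replicate (length w - count_list b False) False @ b) (map Suc w)"

definition F :: "nat list \<Rightarrow> bool list \<Rightarrow> nat list" where
  "F s b = std (gs k (mg (replicate (length s - count_list b False) False @ b) (map Suc s)))"

definition MM :: "nat list \<Rightarrow> nat list \<Rightarrow> nat" where
  "MM t s = card {b \<in> Bset (length s). F s b = t}"

definition SS :: "nat list set" where
  "SS = {s. length s \<le> (k - 2) * r \<and> set s \<subseteq> {..k}}"

definition Nc :: "nat \<Rightarrow> nat list \<Rightarrow> nat" where
  "Nc n s = card {w \<in> Av n. st w = s}"

lemma word_set: "is_word_on n r w \<Longrightarrow> set w \<subseteq> {1..n}"
  unfolding is_word_on_def by blast

lemma word_count: "is_word_on n r w \<Longrightarrow> count_list w x \<le> r"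
  unfolding is_word_on_def by (metis count_notin le0 order.refl subsetD)

lemma word_length: "is_word_on n r w \<Longrightarrow> length w = n * r"
proof -
  assume w: "is_word_on n r w"
  have "length w = sum (count_list w) {1..n}" using sum_count_set[of w "{1..n}"] word_set[OF w] by simp
  also have "\<dots> = sum (\<lambda>_. r) {1..n}" using w unfolding is_word_on_def by simp
  finally show ?thesis by simp
qed

lemma finite_Av: "finite (Av n)"
proof -
  have "Av n \<subseteq> {xs. set xs \<subseteq> {1..n} \<and> length xs = n * r}"
    unfolding Av_def using word_set word_length by auto
  moreover have "finite {xs. set xs \<subseteq> {1..n} \<and> length xs = n * r}" by (rule finite_lists_length_eq) simp
  ultimately show ?thesis by (rule finite_subset)
qed

lemma finite_SS: "finite SS"
proof -
  have "SS \<subseteq> {xs. set xs \<subseteq> {..k} \<and> length xs \<le> (k - 2) * r}" unfolding SS_def by auto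
  moreover have "finite {xs. set xs \<subseteq> {..k} \<and> length xs \<le> (k - 2) * r}" by (rule finite_lists_length_le) simp
  ultimately show ?thesis by (rule finite_subset)
qed

lemma finite_Bset: "finite (Bset g)"
proof -
  have "Bset g \<subseteq> {xs. set xs \<subseteq> UNIV \<and> length xs \<le> r + g}"
    unfolding Bset_def using length_bool by fastforce
  moreover have "finite {xs. set xs \<subseteq> (UNIV::bool set) \<and> length xs \<le> r + g}" by (rule finite_lists_length_le) simp
  ultimately show ?thesis by (rule finite_subset)
qed

lemma st_SS: assumes w: "is_word_on n r w" shows "st w \<in> SS"
proof -
  let ?g = "gs k w"
  have cg: "card (set ?g) \<le> k - 2" using good_card[OF good_gs[OF k2] k2] .
  have cnt: "count_list ?g x \<le> r" for x
  proof -
    have "w = take (gsi k w) w @ ?g" unfolding gs_def by simp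
    then have "count_list w x = count_list (take (gsi k w) w) x + count_list ?g x" by (metis count_list_append)
    then show ?thesis using word_count[OF w, of x] by linarith
  qed
  have "length ?g = sum (count_list ?g) (set ?g)" using sum_count_set[of ?g "set ?g"] by simp
  also have "\<dots> \<le> sum (\<lambda>_. r) (set ?g)" by (rule sum_mono) (rule cnt)
  also have "\<dots> = card (set ?g) * r" by simp
  also have "\<dots> \<le> (k - 2) * r" using cg by simp
  finally have len: "length (st w) \<le> (k - 2) * r" unfolding st_def by simp
  have "set (st w) \<subseteq> {1..card (set ?g)}" unfolding st_def by (rule set_std)
  moreover have "{1..card (set ?g)} \<subseteq> {..k}" using cg by auto
  ultimately have "set (st w) \<subseteq> {..k}" by (rule subset_trans)
  then show ?thesis using len unfolding SS_def by simp
qed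

lemma Suc_smo: "strict_mono_on A Suc"
  by (rule strict_mono_onI) simp

lemma key:
  assumes w: "is_word_on n r w" and b: "b \<noteq> []" "hd b" "count_list b False \<le> length w"
  shows "\<not> bad k (Phi w b) \<longleftrightarrow> \<not> bad k w \<and> count_list b False \<le> length (gs k w)"
proof -
  let ?W = "map Suc w"
  let ?L = "length ?W"
  let ?j = "count_list b False"
  let ?p = "?L - ?j"
  obtain b' where b': "b = True # b'" using b by (cases b) auto
  have j': "count_list b' False = ?j" using b' by simp
  have W1: "1 \<notin> set ?W" using word_set[OF w] by auto
  have ph: "Phi w b = take ?p ?W @ 1 # mg b' (drop ?p ?W)"
    unfolding Phi_def using mg_rep[of ?p ?W "True # b'"] b' by simp
  have u1: "1 \<notin> set (take ?p ?W)" using W1 by (meson in_set_takeD)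
  have pos: "\<forall>x\<in>set (take ?p ?W @ 1 # mg b' (drop ?p ?W)). 1 \<le> x"
  proof
    fix x assume "x \<in> set (take ?p ?W @ 1 # mg b' (drop ?p ?W))"
    moreover have "set (mg b' (drop ?p ?W)) \<subseteq> insert 1 (set ?W)"
      using mg_set[of b' "drop ?p ?W"] set_drop_subset[of ?p ?W] by blast
    moreover have "set (take ?p ?W) \<subseteq> set ?W" by (rule set_take_subset)
    ultimately have "x \<in> insert 1 (set ?W)" by auto
    then show "1 \<le> x" by auto
  qed
  have fv: "filter (\<lambda>x. x \<noteq> 1) (mg b' (drop ?p ?W)) = drop ?p ?W"
  proof (rule mg_filter)
    show "1 \<notin> set (drop ?p ?W)" using W1 by (meson in_set_dropD)
    show "count_list b' False = length (drop ?p ?W)" using j' b(3) by simp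
  qed
  have fuv: "filter (\<lambda>x. x \<noteq> 1) (take ?p ?W @ mg b' (drop ?p ?W)) = ?W"
  proof -
    have "filter (\<lambda>x. x \<noteq> 1) (take ?p ?W) = take ?p ?W" using u1 by (auto intro: filter_True)
    then show ?thesis using fv by simp
  qed
  have "bad k (Phi w b) \<longleftrightarrow> bad k ?W \<or> \<not> good k (drop ?p ?W)"
    using decomp[OF u1 pos, of k] unfolding ph fuv fv .
  moreover have "bad k ?W \<longleftrightarrow> bad k w" by (rule bad_map) (rule Suc_smo)
  moreover have "good k (drop ?p ?W) \<longleftrightarrow> ?j \<le> length (gs k w)"
  proof -
    have "good k (drop ?p ?W) \<longleftrightarrow> gsi k ?W \<le> ?p" by (rule good_drop_iff[OF k2])
    moreover have "gsi k ?W = gsi k w" by (rule gsi_map[OF k2 Suc_smo])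
    moreover have "gsi k w \<le> length w" by (rule gsi_le[OF k2])
    ultimately show ?thesis using b(3) length_gs[of k w] by auto
  qed
  ultimately show ?thesis by blast
qed

lemma Phi_word:
  assumes w: "is_word_on n r w" and b: "count_list b True = r" "count_list b False \<le> length w"
  shows "is_word_on (Suc n) r (Phi w b)"
proof -
  let ?m = "replicate (length w - count_list b False) False @ b"
  have cm: "count_list ?m False = length (map Suc w)" using b by simp
  have cmT: "count_list ?m True = r" using b by simp
  have "set (Phi w b) \<subseteq> {1..Suc n}"
  proof
    fix x assume "x \<in> set (Phi w b)"
    then have "x \<in> insert 1 (set (map Suc w))" unfolding Phi_def using mg_set by blast
    then show "x \<in> {1..Suc n}" using word_set[OF w] by auto
  qed
  moreover have "count_list (Phi w b) a = r" if a: "a \<in> {1..Suc n}" for a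
  proof (cases "a = 1")
    case True
    have "count_list (map Suc w) 1 = 0" by (rule count_notin) (use word_set[OF w] in auto)
    then show ?thesis unfolding Phi_def mg_count[OF cm] using True cmT by simp
  next
    case False
    then obtain y where y: "a = Suc y" "y \<in> {1..n}" using a by (cases a) auto
    have "count_list (map Suc w) (Suc y) = count_list w y" by (rule count_list_map_conv) (simp add: inj_def)
    then show ?thesis unfolding Phi_def mg_count[OF cm] using False y w unfolding is_word_on_def by simp
  qed
  ultimately show ?thesis unfolding is_word_on_def by blast
qed

lemma Phi_filter: assumes w: "is_word_on n r w" and b: "count_list b False \<le> length w"
  shows "filter (\<lambda>x. x \<noteq> 1) (Phi w b) = map Suc w"
  unfolding Phi_def by (rule mg_filter) (use word_set[OF w] b in auto)

lemma Phi_mask: assumes w: "is_word_on n r w" and b: "count_list b False \<le> length w"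
  shows "map (\<lambda>x. x = 1) (Phi w b) = replicate (length w - count_list b False) False @ b"
  unfolding Phi_def by (rule mg_mask) (use word_set[OF w] b in auto)

lemma dropWhile_rep: "b \<noteq> [] \<Longrightarrow> hd b \<Longrightarrow> dropWhile Not (replicate p False @ b) = b"
  by (induction p) (cases b; auto)+

lemma Phi_inj:
  assumes "is_word_on n r w1" "count_list b1 False \<le> length w1" "b1 \<noteq> []" "hd b1"
    "is_word_on n r w2" "count_list b2 False \<le> length w2" "b2 \<noteq> []" "hd b2"
    "Phi w1 b1 = Phi w2 b2"
  shows "w1 = w2 \<and> b1 = b2"
proof -
  have "map Suc w1 = map Suc w2" using Phi_filter[OF assms(1,2)] Phi_filter[OF assms(5,6)] assms(9) by simp
  then have "w1 = w2" by (simp add: inj_map_eq_map inj_def)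
  moreover have "replicate (length w1 - count_list b1 False) False @ b1 = replicate (length w2 - count_list b2 False) False @ b2"
    using Phi_mask[OF assms(1,2)] Phi_mask[OF assms(5,6)] assms(9) by simp
  then have "b1 = b2" using dropWhile_rep[OF assms(3,4)] dropWhile_rep[OF assms(7,8)] by metis
  ultimately show ?thesis by simp
qed

lemma Av_surj:
  assumes w: "w \<in> Av (Suc n)"
  shows "\<exists>w' b. w' \<in> Av n \<and> b \<in> Bset (length (st w')) \<and> w = Phi w' b"
proof -
  have ww: "is_word_on (Suc n) r w" and nb: "\<not> bad k w" using w unfolding Av_def by auto
  let ?f = "filter (\<lambda>x. x \<noteq> (1::nat)) w"
  define w' where "w' = map (\<lambda>x. x - 1) ?f"
  have ge2: "\<forall>x\<in>set ?f. 2 \<le> x" using word_set[OF ww] by fastforce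
  have Sw': "map Suc w' = ?f" unfolding w'_def using ge2 by (rule map_Suc_pred)
  have w'w: "is_word_on n r w'"
  proof -
    have "set w' \<subseteq> {1..n}"
    proof
      fix y assume "y \<in> set w'"
      then obtain x where x: "x \<in> set ?f" "y = x - 1" unfolding w'_def by auto
      then have "x \<in> {1..Suc n}" using word_set[OF ww] by auto
      then show "y \<in> {1..n}" using x ge2 by auto
    qed
    moreover have "count_list w' y = r" if y: "y \<in> {1..n}" for y
    proof -
      have "count_list w' y = count_list (map Suc w') (Suc y)" by (rule count_list_map_conv[symmetric]) (simp add: inj_def)
      also have "\<dots> = count_list w (Suc y)" unfolding Sw' count_filter using y by simp
      also have "\<dots> = r" using ww y unfolding is_word_on_def by simp
      finally show ?thesis .
    qed
    ultimately show ?thesis unfolding is_word_on_def by blast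
  qed
  define m where "m = map (\<lambda>x. x = (1::nat)) w"
  define b where "b = dropWhile Not m"
  define p where "p = length (takeWhile Not m)"
  have tw: "takeWhile Not m = replicate p False"
    unfolding p_def by (rule replicate_length_same[symmetric]) (auto dest: set_takeWhileD)
  have mb: "m = replicate p False @ b" unfolding b_def using takeWhile_dropWhile_id[of Not m] tw by simp
  have c1: "count_list w 1 = r" using ww unfolding is_word_on_def by simp
  have cmT: "count_list m True = r" unfolding m_def using count_mask_True[of w] c1 by simp
  have "count_list m True = count_list b True" by (subst mb) simp
  then have cT: "count_list b True = r" using cmT by simp
  have Tm: "True \<in> set m" using cmT r1 count_list_0_iff[of m True] by auto
  have bne: "b \<noteq> []" unfolding b_def dropWhile_eq_Nil_conv using Tm by auto
  have hb: "hd b" using hd_dropWhile[of Not m] bne unfolding b_def by simp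
  have cF: "count_list m False = length w'" using count_mask_False[of w] Sw' unfolding m_def
    by (metis length_map)
  then have cFb: "count_list b False + p = length w'" using mb by simp
  have pe: "p = length w' - count_list b False" using cFb by simp
  have weq: "w = Phi w' b"
  proof -
    have e1: "mg m ?f = w" unfolding m_def by (rule mg_recon)
    have e2: "Phi w' b = mg (replicate p False @ b) ?f" unfolding Phi_def Sw' pe ..
    show ?thesis unfolding e2 mb[symmetric] e1 ..
  qed
  have "\<not> bad k w' \<and> count_list b False \<le> length (gs k w')"
    using key[OF w'w bne hb] cFb nb weq by simp
  then have "w' \<in> Av n" "b \<in> Bset (length (st w'))"
    unfolding Av_def Bset_def st_def using w'w bne hb cT by auto
  then show ?thesis using weq by blast
qed

definition D :: "nat \<Rightarrow> (nat list \<times> bool list) set" where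
  "D n = Sigma (Av n) (\<lambda>w'. Bset (length (st w')))"

lemma len_st_le: "length (st w) \<le> length w"
  unfolding st_def by (simp add: length_gs)

lemma Av_image: "Av (Suc n) = (\<lambda>(w, b). Phi w b) ` D n"
proof
  show "Av (Suc n) \<subseteq> (\<lambda>(w, b). Phi w b) ` D n"
  proof
    fix w assume "w \<in> Av (Suc n)"
    then obtain w' b where "w' \<in> Av n" "b \<in> Bset (length (st w'))" "w = Phi w' b" using Av_surj by blast
    then show "w \<in> (\<lambda>(w, b). Phi w b) ` D n" unfolding D_def by force
  qed
next
  show "(\<lambda>(w, b). Phi w b) ` D n \<subseteq> Av (Suc n)"
  proof
    fix x assume "x \<in> (\<lambda>(w, b). Phi w b) ` D n"
    then obtain w b where wb: "w \<in> Av n" "b \<in> Bset (length (st w))" "x = Phi w b" unfolding D_def by auto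
    have ww: "is_word_on n r w" "\<not> bad k w" using wb unfolding Av_def by auto
    have bb: "b \<noteq> []" "hd b" "count_list b True = r" "count_list b False \<le> length (gs k w)"
      using wb unfolding Bset_def st_def by auto
    have bl: "count_list b False \<le> length w" using bb(4) by (simp add: length_gs)
    have "\<not> bad k (Phi w b)" using key[OF ww(1) bb(1,2) bl] ww bb by simp
    moreover have "is_word_on (Suc n) r (Phi w b)" by (rule Phi_word[OF ww(1) bb(3) bl])
    ultimately show "x \<in> Av (Suc n)" unfolding Av_def using wb by simp
  qed
qed

lemma Phi_inj_on: "inj_on (\<lambda>(w, b). Phi w b) (D n)"
proof (rule inj_onI)
  fix x y assume x: "x \<in> D n" and y: "y \<in> D n" and e: "(\<lambda>(w, b). Phi w b) x = (\<lambda>(w, b). Phi w b) y"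
  obtain w1 b1 where x': "x = (w1, b1)" by (cases x)
  obtain w2 b2 where y': "y = (w2, b2)" by (cases y)
  have h1: "is_word_on n r w1" "count_list b1 False \<le> length w1" "b1 \<noteq> []" "hd b1"
    using x x' len_st_le[of w1] unfolding D_def Av_def Bset_def by auto
  have h2: "is_word_on n r w2" "count_list b2 False \<le> length w2" "b2 \<noteq> []" "hd b2"
    using y y' len_st_le[of w2] unfolding D_def Av_def Bset_def by auto
  have "Phi w1 b1 = Phi w2 b2" using e x' y' by simp
  then show "x = y" using Phi_inj[OF h1 h2] x' y' by simp
qed

end


context AV
begin

lemma drop_take_drop: "i \<le> m \<Longrightarrow> m \<le> length xs \<Longrightarrow> drop i (take m xs) @ drop m xs = drop i xs"
proof -
  assume a: "i \<le> m" "m \<le> length xs"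
  have "drop i xs = drop i (take m xs @ drop m xs)" by (simp only: append_take_drop_id)
  also have "\<dots> = drop i (take m xs) @ drop (i - length (take m xs)) (drop m xs)" by (rule drop_append)
  also have "i - length (take m xs) = 0" using a by simp
  finally show ?thesis by simp
qed

lemma st_Phi:
  assumes w: "w \<in> Av n" and b: "b \<in> Bset (length (st w))"
  shows "st (Phi w b) = F (st w) b"
proof -
  have ww: "is_word_on n r w" using w unfolding Av_def by auto
  let ?g = "length (gs k w)"
  let ?j = "count_list b False"
  let ?W = "map Suc w"
  let ?L = "length w"
  have bb: "b \<noteq> []" "hd b" "count_list b True = r" "?j \<le> ?g"
    using b unfolding Bset_def st_def by auto
  have gL: "?g \<le> ?L" by (simp add: length_gs)
  have gsW: "gs k ?W = map Suc (gs k w)" by (rule gs_map[OF k2 Suc_smo])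
  have gsiW: "gsi k ?W = ?L - ?g"
  proof -
    have "gsi k ?W = gsi k w" by (rule gsi_map[OF k2 Suc_smo])
    moreover have "gsi k w \<le> ?L" by (rule gsi_le[OF k2])
    ultimately show ?thesis by (simp add: length_gs)
  qed
  define B where "B = replicate (?g - ?j) False @ b"
  define X where "X = mg B (gs k ?W)"
  define P where "P = take (?L - ?g) ?W"
  have W1: "1 \<notin> set ?W" using word_set[OF ww] by auto
  have dW: "drop (?L - ?g) ?W = gs k ?W" unfolding gs_def gsiW ..
  have e1: "Phi w b = P @ X"
  proof -
    have "replicate (?L - ?j) False = replicate (?L - ?g) False @ replicate (?g - ?j) False"
      using bb(4) gL by (simp add: replicate_add[symmetric])
    then have "Phi w b = mg (replicate (?L - ?g) False @ B) ?W" unfolding Phi_def B_def by simp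
    also have "\<dots> = take (?L - ?g) ?W @ mg B (drop (?L - ?g) ?W)" by (rule mg_rep) simp
    finally show ?thesis unfolding P_def X_def dW .
  qed
  have cB: "count_list B False = length (gs k ?W)" unfolding B_def gsW using bb(4) by simp
  have gsW1: "1 \<notin> set (gs k ?W)" using W1 set_gs[of k ?W] by blast
  have fX: "filter (\<lambda>x. x \<noteq> 1) X = gs k ?W" unfolding X_def by (rule mg_filter[OF gsW1 cB])
  have lP: "length P = ?L - ?g" unfolding P_def by simp
  have e2: "gs k (P @ X) = gs k X"
  proof (rule gs_append[OF k2], intro allI impI)
    fix i assume i: "i < length P"
    show "\<not> good k (drop i (P @ X))"
    proof
      assume gd: "good k (drop i (P @ X))"
      have "drop i (P @ X) = drop i P @ X" using i by simp
      moreover have "filter (\<lambda>x. x \<noteq> 1) (drop i P) = drop i P"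
      proof (rule filter_True)
        have "set (drop i P) \<subseteq> set ?W" unfolding P_def
          using set_drop_subset[of i "take (?L - ?g) ?W"] set_take_subset[of "?L - ?g" ?W] by blast
        then show "\<forall>x\<in>set (drop i P). x \<noteq> 1" using W1 by blast
      qed
      ultimately have "filter (\<lambda>x. x \<noteq> 1) (drop i (P @ X)) = drop i P @ gs k ?W" using fX by simp
      also have "\<dots> = drop i ?W" unfolding P_def dW[symmetric] by (rule drop_take_drop) (use i lP in auto)
      finally have "subseq (drop i ?W) (drop i (P @ X))" by (metis subseq_filter_left)
      then have "good k (drop i ?W)" using gd good_mono by blast
      then have "gsi k ?W \<le> i" using good_drop_iff[OF k2] by blast
      then show False using i lP gsiW by simp
    qed
  qed
  define s where "s = st w"
  obtain gg where gg: "strict_mono_on (set s) gg" "gs k w = map gg s" "\<forall>y\<in>set s. gg y \<in> set (gs k w)"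
    using std_inv[of "gs k w"] unfolding s_def st_def by blast
  have ls: "length s = ?g" unfolding s_def st_def by simp
  have s1: "\<forall>y\<in>set s. 1 \<le> y" using set_std[of "gs k w"] unfolding s_def st_def by auto
  have gg1: "\<forall>y\<in>set s. 1 \<le> gg y"
  proof
    fix y assume "y \<in> set s"
    then have "gg y \<in> set w" using gg(3) set_gs[of k w] by blast
    then show "1 \<le> gg y" using word_set[OF ww] by auto
  qed
  define h where "h x = (if x \<le> 1 then x else Suc (gg (x - 1)))" for x
  define Z where "Z = mg B (map Suc s)"
  have XZ: "X = map h Z"
  proof -
    have "X = mg B (map Suc (map gg s))" unfolding X_def gsW gg(2) ..
    also have "\<dots> = map h Z" unfolding Z_def
      by (rule mg_relabel) (use s1 in \<open>auto simp: h_def\<close>)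
    finally show ?thesis .
  qed
  have setZ: "set Z \<subseteq> insert 1 (Suc ` set s)" unfolding Z_def using mg_set[of B "map Suc s"] by simp
  have hsmo: "strict_mono_on (set Z) h"
  proof (rule strict_mono_onI)
    fix a c assume ac: "a \<in> set Z" "c \<in> set Z" "a < c"
    then have "a \<in> insert 1 (Suc ` set s)" "c \<in> insert 1 (Suc ` set s)" using setZ by auto
    then show "h a < h c"
    proof (elim insertE imageE)
      assume "a = 1" "c = 1" then show ?thesis using ac by simp
    next
      fix y assume "a = 1" "y \<in> set s" "c = Suc y"
      then show ?thesis using gg1 s1 unfolding h_def by auto
    next
      fix y assume "a = Suc y" "y \<in> set s" "c = 1"
      then show ?thesis using ac s1 by auto
    next
      fix y y' assume "a = Suc y" "y \<in> set s" "c = Suc y'" "y' \<in> set s"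
      then show ?thesis using ac s1 strict_mono_on_less[OF gg(1), of y y'] unfolding h_def by auto
    qed
  qed
  have "st (Phi w b) = std (gs k X)" unfolding st_def e1 e2 ..
  also have "\<dots> = std (map h (gs k Z))" unfolding XZ using gs_map[OF k2 hsmo] by simp
  also have "\<dots> = std (gs k Z)"
    by (rule std_map) (rule smo_sub[OF hsmo set_gs])
  also have "\<dots> = F s b" unfolding F_def Z_def B_def ls ..
  finally show ?thesis unfolding s_def .
qed

lemma Nc_step: "Nc (Suc n) t = (\<Sum>s\<in>SS. MM t s * Nc n s)"
proof -
  let ?Phi = "\<lambda>(w, b). Phi w b"
  let ?E = "{x \<in> D n. F (st (fst x)) (snd x) = t}"
  have eq1: "{w \<in> Av (Suc n). st w = t} = ?Phi ` ?E"
  proof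
    show "{w \<in> Av (Suc n). st w = t} \<subseteq> ?Phi ` ?E"
    proof
      fix v assume "v \<in> {w \<in> Av (Suc n). st w = t}"
      then have v: "v \<in> Av (Suc n)" "st v = t" by auto
      then obtain x where x: "x \<in> D n" "v = ?Phi x" using Av_image by blast
      obtain w b where wb: "x = (w, b)" by (cases x)
      have "w \<in> Av n" "b \<in> Bset (length (st w))" using x(1) wb unfolding D_def by auto
      then have "st (Phi w b) = F (st w) b" by (rule st_Phi)
      then have "x \<in> ?E" using x v wb by simp
      then show "v \<in> ?Phi ` ?E" using x(2) by blast
    qed
  next
    show "?Phi ` ?E \<subseteq> {w \<in> Av (Suc n). st w = t}"
    proof
      fix v assume "v \<in> ?Phi ` ?E"
      then obtain x where x: "x \<in> ?E" "v = ?Phi x" by blast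
      obtain w b where wb: "x = (w, b)" by (cases x)
      have "w \<in> Av n" "b \<in> Bset (length (st w))" using x(1) wb unfolding D_def by auto
      then have "st (Phi w b) = F (st w) b" by (rule st_Phi)
      moreover have "v \<in> Av (Suc n)" using Av_image x by blast
      ultimately show "v \<in> {w \<in> Av (Suc n). st w = t}" using x wb by simp
    qed
  qed
  have "Nc (Suc n) t = card ?E" unfolding Nc_def eq1
    by (rule card_image) (rule inj_on_subset[OF Phi_inj_on]; blast)
  also have "?E = Sigma (Av n) (\<lambda>w. {b \<in> Bset (length (st w)). F (st w) b = t})"
    unfolding D_def by auto
  also have "card \<dots> = (\<Sum>w\<in>Av n. card {b \<in> Bset (length (st w)). F (st w) b = t})"
    by (rule card_SigmaI) (use finite_Av finite_Bset in auto)
  also have "\<dots> = (\<Sum>w\<in>Av n. MM t (st w))" unfolding MM_def ..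
  also have "\<dots> = (\<Sum>s\<in>SS. \<Sum>w\<in>{w \<in> Av n. st w = s}. MM t (st w))"
    by (rule sum.group[symmetric]) (use finite_Av finite_SS st_SS Av_def in auto)
  also have "\<dots> = (\<Sum>s\<in>SS. MM t s * Nc n s)"
  proof (rule sum.cong[OF refl])
    fix s assume "s \<in> SS"
    have "(\<Sum>w\<in>{w \<in> Av n. st w = s}. MM t (st w)) = (\<Sum>w\<in>{w \<in> Av n. st w = s}. MM t s)"
      by (rule sum.cong) auto
    also have "\<dots> = MM t s * Nc n s" unfolding Nc_def by simp
    finally show "(\<Sum>w\<in>{w \<in> Av n. st w = s}. MM t (st w)) = MM t s * Nc n s" .
  qed
  finally show ?thesis .
qed

lemma card_Av: "card (Av n) = (\<Sum>s\<in>SS. Nc n s)"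
proof -
  have "card (Av n) = (\<Sum>w\<in>Av n. 1)" by simp
  also have "\<dots> = (\<Sum>s\<in>SS. \<Sum>w\<in>{w \<in> Av n. st w = s}. 1)"
    by (rule sum.group[symmetric]) (use finite_Av finite_SS st_SS Av_def in auto)
  also have "\<dots> = (\<Sum>s\<in>SS. Nc n s)" unfolding Nc_def by simp
  finally show ?thesis .
qed

end


lemma lin_dep_step:
  fixes x :: "nat \<Rightarrow> nat \<Rightarrow> rat"
  shows "\<exists>d a. \<forall>i<m. x d i = (\<Sum>l<d. a l * x l i)"
proof -
  define Mt :: "rat mat" where "Mt = mat\<^sub>r (Suc m) (Suc m) (\<lambda>i. if i = m then 0\<^sub>v (Suc m) else vec (Suc m) (\<lambda>l. x l i))"
  have "det Mt = 0" unfolding Mt_def by (rule det_row_0) auto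
  moreover have Mc: "Mt \<in> carrier_mat (Suc m) (Suc m)" unfolding Mt_def by simp
  ultimately obtain v where v: "v \<in> carrier_vec (Suc m)" "v \<noteq> 0\<^sub>v (Suc m)" "Mt *\<^sub>v v = 0\<^sub>v (Suc m)"
    using det_0_iff_vec_prod_zero_field[OF Mc] by blast
  have dv: "dim_vec v = Suc m" using v(1) by simp
  have eqs: "(\<Sum>l<Suc m. x l i * v $ l) = 0" if i: "i < m" for i
  proof -
    have "(Mt *\<^sub>v v) $ i = 0" using v(3) i by simp
    moreover have "(Mt *\<^sub>v v) $ i = row Mt i \<bullet> v" by (rule index_mult_mat_vec) (use i Mt_def in simp)
    moreover have "row Mt i = vec (Suc m) (\<lambda>l. x l i)" unfolding Mt_def using i by (subst row_mat_of_row_fun) auto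
    ultimately show ?thesis unfolding scalar_prod_def dv by (simp add: atLeast0LessThan)
  qed
  define Z where "Z = {l. l < Suc m \<and> v $ l \<noteq> 0}"
  have "Z \<noteq> {}"
  proof
    assume "Z = {}"
    then have "v = 0\<^sub>v (Suc m)" unfolding Z_def using dv by (intro eq_vecI) auto
    then show False using v(2) by simp
  qed
  moreover have fZ: "finite Z" unfolding Z_def by simp
  ultimately have dZ: "Max Z \<in> Z" by (rule Max_in[rotated])
  define d where "d = Max Z"
  have vd: "v $ d \<noteq> 0" "d < Suc m" using dZ unfolding d_def Z_def by auto
  have vz: "v $ l = 0" if "d < l" "l < Suc m" for l
  proof (rule ccontr)
    assume "v $ l \<noteq> 0"
    then have "l \<in> Z" unfolding Z_def using that by simp
    then have "l \<le> d" unfolding d_def using fZ by simp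
    then show False using that by simp
  qed
  define a where "a l = - v $ l / v $ d" for l
  have "x d i = (\<Sum>l<d. a l * x l i)" if i: "i < m" for i
  proof -
    have "(\<Sum>l<Suc m. x l i * v $ l) = (\<Sum>l<Suc d. x l i * v $ l)"
    proof (rule sum.mono_neutral_right)
      show "{..<Suc d} \<subseteq> {..<Suc m}" using vd by auto
      show "\<forall>l\<in>{..<Suc m} - {..<Suc d}. x l i * v $ l = 0" using vz by auto
    qed simp
    then have "(\<Sum>l<Suc d. x l i * v $ l) = 0" using eqs[OF i] by simp
    then have "x d i * v $ d = - (\<Sum>l<d. x l i * v $ l)" by (simp add: add_eq_0_iff2 add.commute)
    then have "x d i = - (\<Sum>l<d. x l i * v $ l) / v $ d" using vd(1) by (simp add: field_simps)
    also have "\<dots> = (\<Sum>l<d. a l * x l i)" unfolding a_def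
      by (simp add: sum_divide_distrib sum_negf[symmetric] field_simps)
    finally show ?thesis .
  qed
  then show ?thesis by blast
qed

lemma linrec:
  fixes x :: "nat \<Rightarrow> nat \<Rightarrow> rat" and A :: "nat \<Rightarrow> nat \<Rightarrow> rat"
  assumes step: "\<And>n i. i < m \<Longrightarrow> x (Suc n) i = (\<Sum>j<m. A i j * x n j)"
  shows "\<exists>d a. \<forall>n. (\<Sum>i<m. x (n + d) i) = (\<Sum>l<d. a l * (\<Sum>i<m. x (n + l) i))"
proof -
  obtain d a where da: "\<forall>i<m. x d i = (\<Sum>l<d. a l * x l i)" using lin_dep_step by blast
  have ind: "\<forall>i<m. x (n + d) i = (\<Sum>l<d. a l * x (n + l) i)" for n
  proof (induction n)
    case 0 then show ?case using da by simp
  next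
    case (Suc n)
    show ?case
    proof (intro allI impI)
      fix i assume i: "i < m"
      have "x (Suc n + d) i = (\<Sum>j<m. A i j * x (n + d) j)" using step[OF i] by simp
      also have "\<dots> = (\<Sum>j<m. A i j * (\<Sum>l<d. a l * x (n + l) j))"
        using Suc.IH by (intro sum.cong) auto
      also have "\<dots> = (\<Sum>l<d. a l * (\<Sum>j<m. A i j * x (n + l) j))"
        by (simp add: sum_distrib_left mult.left_commute sum.swap[of _ "{..<m}"])
      also have "\<dots> = (\<Sum>l<d. a l * x (Suc n + l) i)"
        using step[OF i] by (intro sum.cong) auto
      finally show "x (Suc n + d) i = (\<Sum>l<d. a l * x (Suc n + l) i)" .
    qed
  qed
  have "(\<Sum>i<m. x (n + d) i) = (\<Sum>l<d. a l * (\<Sum>i<m. x (n + l) i))" for n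
  proof -
    have "(\<Sum>i<m. x (n + d) i) = (\<Sum>i<m. \<Sum>l<d. a l * x (n + l) i)" using ind by (intro sum.cong) auto
    also have "\<dots> = (\<Sum>l<d. a l * (\<Sum>i<m. x (n + l) i))"
      by (simp add: sum_distrib_left sum.swap[of _ "{..<m}"])
    finally show ?thesis .
  qed
  then show ?thesis by blast
qed


lemma sum_distinct_nth: "distinct ss \<Longrightarrow> sum f (set ss) = (\<Sum>j<length ss. f (ss ! j))"
  by (simp add: sum.distinct_set_conv_list sum_list_sum_nth atLeast0LessThan)

theorem mainTheorem3:
  fixes k r :: nat
  assumes "k \<ge> 3" and "r \<ge> 1"
  shows "\<exists>(d::nat) (N::nat) (a :: nat \<Rightarrow> rat).
           \<forall>n\<ge>N. of_nat (count_avoiders k r (n + d)) =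
                    (\<Sum>i<d. a i * of_nat (count_avoiders k r (n + i)))"
proof -
  interpret AV k r using assms by unfold_locales
  obtain ss where ss: "set ss = SS" "distinct ss" using finite_distinct_list[OF finite_SS] by blast
  define x where "x n i = (of_nat (Nc n (ss ! i)) :: rat)" for n i
  define A where "A i j = (of_nat (MM (ss ! i) (ss ! j)) :: rat)" for i j
  have step: "x (Suc n) i = (\<Sum>j<length ss. A i j * x n j)" if "i < length ss" for n i
  proof -
    have "Nc (Suc n) (ss ! i) = (\<Sum>s\<in>SS. MM (ss ! i) s * Nc n s)" by (rule Nc_step)
    also have "\<dots> = (\<Sum>j<length ss. MM (ss ! i) (ss ! j) * Nc n (ss ! j))"
      unfolding ss(1)[symmetric] by (rule sum_distinct_nth[OF ss(2)])
    finally show ?thesis unfolding x_def A_def by simp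
  qed
  have cnt: "of_nat (count_avoiders k r n) = (\<Sum>i<length ss. x n i)" for n
  proof -
    have "count_avoiders k r n = card (Av n)" unfolding count_avoiders_def Av_eq ..
    also have "\<dots> = (\<Sum>s\<in>SS. Nc n s)" by (rule card_Av)
    also have "\<dots> = (\<Sum>j<length ss. Nc n (ss ! j))"
      unfolding ss(1)[symmetric] by (rule sum_distinct_nth[OF ss(2)])
    finally show ?thesis unfolding x_def by simp
  qed
  obtain d a where da: "\<forall>n. (\<Sum>i<length ss. x (n + d) i) = (\<Sum>l<d. a l * (\<Sum>i<length ss. x (n + l) i))"
    using linrec[of "length ss" x A] step by blast
  show ?thesis
  proof (intro exI[of _ d] exI[of _ 0] exI[of _ a] allI impI)
    fix n :: nat
    show "of_nat (count_avoiders k r (n + d)) = (\<Sum>i<d. a i * of_nat (count_avoiders k r (n + i)))"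
      unfolding cnt using da by simp
  qed
qed

end
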